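(* In a public goods economy (as in the context), if an outcome $\mathbf{a}$ is Pareto efficient, then every deviation $\mathbf{a}'$ from $\mathbf{a}$ (for any coalition) satisfies $\mathbf{a}'\lneq\mathbf{a}$.
   Context: Agents $N=\{1,\dots,n\}$; outcomes are vectors in $[0,1]^n$. Vector orderings: $\mathbf{x}\ge\mathbf{y}$ means $x_i\ge y_i$ for all $i$; $\mathbf{x}>\mathbf{y}$ means $x_i>y_i$ for all $i$; $\mathbf{x}\gneq\mathbf{y}$ means $\mathbf{x}\ge\mathbf{y}$ and $x_j>y_j$ for some $j$ (and $\mathbf{x}\lneq\mathbf{y}$ means $\mathbf{y}\gneq\mathbf{x}$). For $C\subseteq N$, $\mathbf{v}_C$ is the restriction of $\mathbf{v}$ to coordinates in $C$. The utility function $\mathbf{u}:[0,1]^n\to[0,1]^n$ is continuous, concave, and has positive externalities: whenever $\mathbf{a}\gneq\mathbf{a}'$ and $a_i=a'_i$, then $u_i(\mathbf{a})>u_i(\mathbf{a}')$. A coalition is a nonempty $C\subseteq N$; $\mathbf{a}'$ is a deviation from $\mathbf{a}$ for $C$ if $\mathbf{a}'_{N\setminus C}=\mathbf{0}$ and $\mathbf{u}_C(\mathbf{a}')>\mathbf{u}_C(\mathbf{a})$. $\mathbf{a}$ is Pareto efficient if there is no outcome $\mathbf{a}''$ with $\mathbf{u}(\mathbf{a}'')\gneq\mathbf{u}(\mathbf{a})$. *)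

theory Defs
  imports "HOL-Analysis.Analysis"
begin

text \<open>Agents are the elements of a finite type 'n; outcomes are vectors in [0,1]^n.\<close>

definition outcomes :: "(real ^ 'n) set" where
  "outcomes = {a. \<forall>i. 0 \<le> a $ i \<and> a $ i \<le> 1}"

definition vge :: "real ^ 'n \<Rightarrow> real ^ 'n \<Rightarrow> bool" where
  "vge x y \<longleftrightarrow> (\<forall>i. x $ i \<ge> y $ i)"

definition vgt :: "real ^ 'n \<Rightarrow> real ^ 'n \<Rightarrow> bool" where
  "vgt x y \<longleftrightarrow> (\<forall>i. x $ i > y $ i)"

definition vgneq :: "real ^ 'n \<Rightarrow> real ^ 'n \<Rightarrow> bool" where
  "vgneq x y \<longleftrightarrow> vge x y \<and> (\<exists>j. x $ j > y $ j)"

definition public_goods_utility :: "(real ^ 'n \<Rightarrow> real ^ 'n) \<Rightarrow> bool" where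
  "public_goods_utility u \<longleftrightarrow>
     u ` outcomes \<subseteq> outcomes \<and>
     continuous_on outcomes u \<and>
     (\<forall>i. concave_on outcomes (\<lambda>a. u a $ i)) \<and>
     (\<forall>a\<in>outcomes. \<forall>a'\<in>outcomes. \<forall>i. vgneq a a' \<and> a $ i = a' $ i \<longrightarrow> u a $ i > u a' $ i)"

definition is_deviation :: "(real ^ 'n \<Rightarrow> real ^ 'n) \<Rightarrow> 'n set \<Rightarrow> real ^ 'n \<Rightarrow> real ^ 'n \<Rightarrow> bool" where
  "is_deviation u C a a' \<longleftrightarrow> a' \<in> outcomes \<and> (\<forall>j. j \<notin> C \<longrightarrow> a' $ j = 0) \<and>
      (\<forall>i\<in>C. u a' $ i > u a $ i)"

definition pareto_efficient :: "(real ^ 'n \<Rightarrow> real ^ 'n) \<Rightarrow> real ^ 'n \<Rightarrow> bool" where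
  "pareto_efficient u a \<longleftrightarrow> (\<nexists>a''. a'' \<in> outcomes \<and> vgneq (u a'') (u a))"

end

theory Submission
  imports Defs
begin

theorem lemma1:
  fixes u :: "real ^ 'n \<Rightarrow> real ^ 'n" and a :: "real ^ 'n"
  assumes "public_goods_utility u"
    and "a \<in> outcomes"
    and "pareto_efficient u a"
  shows "\<forall>C a'. C \<noteq> {} \<and> is_deviation u C a a' \<longrightarrow> vgneq a a'"
proof (intro allI impI)
  fix C a'
  assume h: "C \<noteq> {} \<and> is_deviation u C a a'"
  have a'o: "a' \<in> outcomes" and z: "\<forall>j. j \<notin> C \<longrightarrow> a' $ j = 0"
    and gt: "\<forall>i\<in>C. u a' $ i > u a $ i"
    using h unfolding is_deviation_def by auto
  have ext: "\<forall>x\<in>outcomes. \<forall>y\<in>outcomes. \<forall>i. vgneq x y \<and> x $ i = y $ i \<longrightarrow> u x $ i > u y $ i"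
    using assms(1) unfolding public_goods_utility_def by blast
  have le: "\<forall>j. a' $ j \<le> a $ j"
  proof (rule ccontr)
    assume "\<not> (\<forall>j. a' $ j \<le> a $ j)"
    then obtain j where j: "a' $ j > a $ j" by (meson not_le)
    define b where "b = (\<chi> i. max (a $ i) (a' $ i))"
    have bo: "b \<in> outcomes" using assms(2) a'o unfolding outcomes_def b_def by (simp add: le_max_iff_disj)
    have "vgneq b a" unfolding vgneq_def vge_def b_def proof (intro conjI allI)
      fix i show "(\<chi> i. max (a $ i) (a' $ i)) $ i \<ge> a $ i" by simp
    next
      show "\<exists>j. (\<chi> i. max (a $ i) (a' $ i)) $ j > a $ j" using j by (intro exI[of _ j]) simp
    qed
    have "\<forall>k. u b $ k > u a $ k"
    proof
      fix k
      show "u b $ k > u a $ k"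
      proof (cases "a $ k \<ge> a' $ k")
        case True
        then have "b $ k = a $ k" unfolding b_def by auto
        then show ?thesis using ext[rule_format, OF bo assms(2), of k] \<open>vgneq b a\<close> by simp
      next
        case False
        have "0 \<le> a $ k" using assms(2) unfolding outcomes_def by simp
        then have kC: "k \<in> C" using z False by force
        have bk: "b $ k = a' $ k" using False unfolding b_def by auto
        have "u b $ k \<ge> u a' $ k"
        proof (cases "b = a'")
          case True then show ?thesis by simp
        next
          case False
          have "vge b a'" unfolding vge_def b_def by auto
          moreover obtain m where "b $ m \<noteq> a' $ m" using False by (metis vec_eq_iff)
          ultimately have "vgneq b a'" unfolding vgneq_def vge_def using \<open>vge b a'\<close>[unfolded vge_def, rule_format, of m] by (metis order_le_less)
          then show ?thesis using ext[rule_format, OF bo a'o, of k] bk by simp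
        qed
        then show ?thesis using gt kC by force
      qed
    qed
    then have "vgneq (u b) (u a)" unfolding vgneq_def vge_def by (meson less_imp_le)
    then show False using assms(3) bo unfolding pareto_efficient_def by blast
  qed
  obtain c where c: "c \<in> C" using h by auto
  then have "u a' $ c > u a $ c" using gt by auto
  then have "a' \<noteq> a" by auto
  then obtain m where "a' $ m \<noteq> a $ m" by (metis vec_eq_iff)
  then show "vgneq a a'" unfolding vgneq_def vge_def using le by (metis order_le_less)
qed

end
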